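(* Every ideal $J$ of $\widetilde{\mathbb{R}}_{sm}$ is convex: if $x\in J$ and $y\in\widetilde{\mathbb{R}}_{sm}$ with $0\le y\le x$, then $y\in J$.
   Context: Let $I=(0,1]$. $\widetilde{\mathbb{R}}_{sm}=\mathcal{E}_{M,sm}/\mathcal{N}_{sm}$ where $\mathcal{E}_{M,sm}$ is the set of smooth nets $(r_\varepsilon)_{\varepsilon\in I}\in\mathbb{R}^I$ with $|r_\varepsilon|=O(\varepsilon^{-N})$ for some $N$, and $\mathcal{N}_{sm}$ those with $|r_\varepsilon|=O(\varepsilon^m)$ for all $m$. For $r,s\in\widetilde{\mathbb{R}}_{sm}$, $r\le s$ means there are representatives with $r_\varepsilon\le s_\varepsilon$ for all $\varepsilon\in I$. *)

theory Defs
  imports "HOL-Analysis.Analysis" "HOL-Library.Landau_Symbols" "HOL-Algebra.QuotRing"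
begin

text \<open>The index set I = (0,1]. Nets are functions real => real, extended by 0 outside I.\<close>
definition Iset :: "real set" where "Iset = {0<..1}"

text \<open>Smoothness (C-infinity) on a set S: a sequence of successive derivatives exists,
  derivatives taken within S (one-sided at the endpoint 1).\<close>
definition smooth_on_set :: "real set \<Rightarrow> (real \<Rightarrow> real) \<Rightarrow> bool" where
  "smooth_on_set S f \<longleftrightarrow> (\<exists>D :: nat \<Rightarrow> real \<Rightarrow> real. D 0 = f \<and>
      (\<forall>n. \<forall>x\<in>S. (D n has_real_derivative D (Suc n) x) (at x within S)))"

definition smooth_net :: "(real \<Rightarrow> real) \<Rightarrow> bool" where
  "smooth_net r \<longleftrightarrow> smooth_on_set Iset r \<and> (\<forall>e. e \<notin> Iset \<longrightarrow> r e = 0)"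

definition Emsm :: "(real \<Rightarrow> real) set" where
  "Emsm = {r. smooth_net r \<and> (\<exists>N::nat. r \<in> O[at_right 0](\<lambda>e. (1 / e) ^ N))}"

definition Nsm :: "(real \<Rightarrow> real) set" where
  "Nsm = {r. smooth_net r \<and> (\<forall>m::nat. r \<in> O[at_right 0](\<lambda>e. e ^ m))}"

definition Rsm :: "(real \<Rightarrow> real) ring" where
  "Rsm = \<lparr>carrier = Emsm,
          monoid.mult = (\<lambda>r s e. r e * s e),
          one = (\<lambda>e. if e \<in> Iset then 1 else 0),
          zero = (\<lambda>e. 0),
          add = (\<lambda>r s e. r e + s e)\<rparr>"

definition Rtsm :: "(real \<Rightarrow> real) set ring" where
  "Rtsm = Rsm Quot Nsm"

definition le_Rtsm :: "(real \<Rightarrow> real) set \<Rightarrow> (real \<Rightarrow> real) set \<Rightarrow> bool" where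
  "le_Rtsm x y \<longleftrightarrow> (\<exists>r\<in>x. \<exists>s\<in>y. \<forall>e\<in>Iset. r e \<le> s e)"

end

theory Submission imports Defs begin

inductive_set SC :: "real set \<Rightarrow> (real \<Rightarrow> real) set" for S where
  base: "smooth_on_set S f \<Longrightarrow> f \<in> SC S"
| const: "(\<lambda>x. c) \<in> SC S"
| ident: "(\<lambda>x. x) \<in> SC S"
| add: "f \<in> SC S \<Longrightarrow> g \<in> SC S \<Longrightarrow> (\<lambda>x. f x + g x) \<in> SC S"
| mult: "f \<in> SC S \<Longrightarrow> g \<in> SC S \<Longrightarrow> (\<lambda>x. f x * g x) \<in> SC S"
| inv: "f \<in> SC S \<Longrightarrow> (\<forall>x\<in>S. f x \<noteq> 0) \<Longrightarrow> (\<lambda>x. inverse (f x)) \<in> SC S"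
| expo: "f \<in> SC S \<Longrightarrow> (\<lambda>x. exp (f x)) \<in> SC S"
| cong: "f \<in> SC S \<Longrightarrow> (\<forall>x\<in>S. f x = g x) \<Longrightarrow> g \<in> SC S"

lemma SC_deriv: "f \<in> SC S \<Longrightarrow> \<exists>f'\<in>SC S. \<forall>x\<in>S. (f has_real_derivative f' x) (at x within S)"
proof (induction rule: SC.induct)
  case (base f)
  then obtain D where D: "D 0 = f" "\<forall>n. \<forall>x\<in>S. (D n has_real_derivative D (Suc n) x) (at x within S)"
    unfolding smooth_on_set_def by blast
  have "smooth_on_set S (D 1)" unfolding smooth_on_set_def
    by (rule exI[of _ "\<lambda>n. D (Suc n)"]) (use D in auto)
  then show ?case using D by (metis One_nat_def SC.base)
next
  case (const c)
  then show ?case by (intro bexI[of _ "\<lambda>x. 0"]) (auto intro: SC.const)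
next
  case ident
  then show ?case by (intro bexI[of _ "\<lambda>x. 1"]) (auto intro: SC.const DERIV_ident)
next
  case (add f g)
  then obtain f' g' where "f' \<in> SC S" "g' \<in> SC S"
    "\<forall>x\<in>S. (f has_real_derivative f' x) (at x within S)"
    "\<forall>x\<in>S. (g has_real_derivative g' x) (at x within S)" by blast
  then show ?case by (intro bexI[of _ "\<lambda>x. f' x + g' x"]) (auto intro: SC.add derivative_intros)
next
  case (mult f g)
  then obtain f' g' where "f' \<in> SC S" "g' \<in> SC S"
    "\<forall>x\<in>S. (f has_real_derivative f' x) (at x within S)"
    "\<forall>x\<in>S. (g has_real_derivative g' x) (at x within S)" by blast
  then show ?case using mult.hyps
    by (intro bexI[of _ "\<lambda>x. f' x * g x + f x * g' x"]) (auto intro!: SC.add SC.mult derivative_eq_intros)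
next
  case (inv f)
  then obtain f' where f': "f' \<in> SC S" 
    "\<forall>x\<in>S. (f has_real_derivative f' x) (at x within S)" by blast
  have "(\<lambda>x. (-1) * f' x * inverse (f x) * inverse (f x)) \<in> SC S"
    using f' inv by (intro SC.mult SC.const SC.inv) auto
  moreover have "\<forall>x\<in>S. ((\<lambda>x. inverse (f x)) has_real_derivative (-1) * f' x * inverse (f x) * inverse (f x)) (at x within S)"
    using f' inv by (auto intro!: derivative_eq_intros simp: field_simps power2_eq_square)
  ultimately show ?case by (intro bexI[where x="\<lambda>x. (-1) * f' x * inverse (f x) * inverse (f x)"])
next
  case (expo f)
  then obtain f' where f': "f' \<in> SC S" 
    "\<forall>x\<in>S. (f has_real_derivative f' x) (at x within S)" by blast
  then show ?case using expo.hyps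
    by (intro bexI[of _ "\<lambda>x. exp (f x) * f' x"]) (auto intro!: SC.mult SC.expo derivative_eq_intros)
next
  case (cong f g)
  then obtain f' where f': "f' \<in> SC S" 
    "\<forall>x\<in>S. (f has_real_derivative f' x) (at x within S)" by blast
  have "\<forall>x\<in>S. (g has_real_derivative f' x) (at x within S)"
  proof
    fix x assume x: "x \<in> S"
    show "(g has_real_derivative f' x) (at x within S)"
      by (rule has_field_derivative_transform_within[of f _ x S 1]) (use f' x cong in auto)
  qed
  then show ?case using f' by blast
qed

lemma SC_smooth: assumes "f \<in> SC S" shows "smooth_on_set S f"
proof -
  define der where "der g = (SOME g'. g' \<in> SC S \<and> (\<forall>x\<in>S. (g has_real_derivative g' x) (at x within S)))" for g
  have der: "der g \<in> SC S \<and> (\<forall>x\<in>S. (g has_real_derivative der g x) (at x within S))" if "g \<in> SC S" for g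
  proof -
    have "\<exists>g'. g' \<in> SC S \<and> (\<forall>x\<in>S. (g has_real_derivative g' x) (at x within S))"
      using SC_deriv[OF that] by blast
    then show ?thesis unfolding der_def by (rule someI_ex)
  qed
  define D where "D n = (der ^^ n) f" for n
  have DS: "D n \<in> SC S" for n by (induction n) (auto simp: D_def assms der)
  show ?thesis unfolding smooth_on_set_def
    by (rule exI[of _ D]) (auto simp: D_def der[OF DS[unfolded D_def]])
qed

lemma bigo_char: "(f::real\<Rightarrow>real) \<in> O[F](g) \<longleftrightarrow> (\<exists>c>0. \<forall>\<^sub>F e in F. \<bar>f e\<bar> \<le> c * \<bar>g e\<bar>)"
  by (auto elim!: landau_o.bigE intro: landau_o.bigI)

lemma ev01: "\<forall>\<^sub>F e in at_right (0::real). 0 < e \<and> e < 1"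
  unfolding eventually_at_right_field by (intro exI[of _ 1]) auto

lemma Nsm_char: "(\<forall>m::nat. (r::real\<Rightarrow>real) \<in> O[at_right 0](\<lambda>e. e ^ m)) \<longleftrightarrow>
   (\<forall>m::nat. \<exists>c>0. \<forall>\<^sub>F e in at_right 0. \<bar>r e\<bar> \<le> c * e ^ m)"
proof -
  have *: "(\<forall>\<^sub>F e in at_right 0. \<bar>r e\<bar> \<le> c * \<bar>e ^ m\<bar>) \<longleftrightarrow> (\<forall>\<^sub>F e in at_right 0. \<bar>r e\<bar> \<le> c * e ^ m)" for c m
    by (rule eventually_cong[OF ev01]) auto
  show ?thesis unfolding bigo_char * ..
qed

lemma Em_char: "((r::real\<Rightarrow>real) \<in> O[at_right 0](\<lambda>e. (1/e) ^ N)) \<longleftrightarrow>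
   (\<exists>c>0. \<forall>\<^sub>F e in at_right 0. \<bar>r e\<bar> \<le> c * (1/e) ^ N)"
proof -
  have *: "(\<forall>\<^sub>F e in at_right 0. \<bar>r e\<bar> \<le> c * \<bar>(1/e) ^ N\<bar>) \<longleftrightarrow> (\<forall>\<^sub>F e in at_right 0. \<bar>r e\<bar> \<le> c * (1/e) ^ N)" for c
    by (rule eventually_cong[OF ev01]) auto
  show ?thesis unfolding bigo_char * ..
qed

lemma exp_neg_bound: assumes "0 < e" shows "exp (- 1 / e) \<le> (real m) ^ m * e ^ m"
proof (cases "m = 0")
  case True then show ?thesis using assms by simp
next
  case False
  have mpos: "real m > 0" using False by simp
  have "exp (1/e) = exp (real m * (1 / (e * real m)))" using mpos by simp
  also have "\<dots> = exp (1 / (e * real m)) ^ m" by (rule exp_of_nat_mult)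
  finally have eq: "exp (1/e) = exp (1 / (e * real m)) ^ m" .
  have "1 / (e * real m) \<le> exp (1 / (e * real m))"
    using exp_ge_add_one_self[of "1 / (e * real m)"] by linarith
  then have "(1 / (e * real m)) ^ m \<le> exp (1 / (e * real m)) ^ m"
    by (rule power_mono) (use assms mpos in auto)
  with eq have le: "(1 / (e * real m)) ^ m \<le> exp (1/e)" by simp
  have pos: "0 < (1 / (e * real m)) ^ m" using assms mpos by simp
  have "exp (- 1 / e) = inverse (exp (1/e))" by (simp add: exp_minus[symmetric])
  also have "\<dots> \<le> inverse ((1 / (e * real m)) ^ m)"
    using le pos by (simp add: le_imp_inverse_le)
  also have "\<dots> = (real m) ^ m * e ^ m" by (simp add: power_mult_distrib field_simps)
  finally show ?thesis .
qed

lemma exp_neg_small: "\<exists>c>0. \<forall>\<^sub>F e in at_right (0::real). \<bar>exp (- 1 / e)\<bar> \<le> c * e ^ m"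
proof (intro exI[of _ "(real m) ^ m + 1"] conjI)
  show "\<forall>\<^sub>F e in at_right (0::real). \<bar>exp (- 1 / e)\<bar> \<le> ((real m) ^ m + 1) * e ^ m"
    using ev01
  proof eventually_elim
    case (elim e)
    then have "exp (- 1 / e) \<le> (real m) ^ m * e ^ m" by (intro exp_neg_bound) auto
    also have "\<dots> \<le> ((real m) ^ m + 1) * e ^ m" using elim by (intro mult_right_mono) auto
    finally show ?case by simp
  qed
qed (auto intro: add_nonneg_pos)

lemma smooth_netI: "f \<in> SC Iset \<Longrightarrow> (\<forall>e. e \<notin> Iset \<longrightarrow> f e = 0) \<Longrightarrow> smooth_net f"
  by (simp add: smooth_net_def SC_smooth)

lemma smooth_net_SC: "smooth_net f \<Longrightarrow> f \<in> SC Iset"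
  by (simp add: smooth_net_def SC.base)

lemma smooth_net_out: "smooth_net f \<Longrightarrow> e \<notin> Iset \<Longrightarrow> f e = 0"
  by (simp add: smooth_net_def)

lemma Nsm_iff: "r \<in> Nsm \<longleftrightarrow> smooth_net r \<and> (\<forall>m::nat. \<exists>c>0. \<forall>\<^sub>F e in at_right 0. \<bar>r e\<bar> \<le> c * e ^ m)"
  unfolding Nsm_def using Nsm_char[of r] by auto

lemma Emsm_iff: "r \<in> Emsm \<longleftrightarrow> smooth_net r \<and> (\<exists>N::nat. \<exists>c>0. \<forall>\<^sub>F e in at_right 0. \<bar>r e\<bar> \<le> c * (1/e) ^ N)"
  unfolding Emsm_def using Em_char[of r] by auto

lemma SC_neg: "f \<in> SC S \<Longrightarrow> (\<lambda>x. - f x) \<in> SC S"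
proof -
  assume "f \<in> SC S"
  then have "(\<lambda>x. (-1) * f x) \<in> SC S" by (rule SC.mult[OF SC.const])
  then show ?thesis by (rule SC.cong) auto
qed

lemma smooth_net_add: "smooth_net a \<Longrightarrow> smooth_net b \<Longrightarrow> smooth_net (\<lambda>e. a e + b e)"
  by (rule smooth_netI[OF SC.add[OF smooth_net_SC smooth_net_SC]]) (auto simp: smooth_net_out)

lemma smooth_net_mult: "smooth_net a \<Longrightarrow> smooth_net b \<Longrightarrow> smooth_net (\<lambda>e. a e * b e)"
  by (rule smooth_netI[OF SC.mult[OF smooth_net_SC smooth_net_SC]]) (auto simp: smooth_net_out)

lemma smooth_net_neg: "smooth_net a \<Longrightarrow> smooth_net (\<lambda>e. - a e)"
  by (rule smooth_netI[OF SC_neg[OF smooth_net_SC]]) (auto simp: smooth_net_out)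

lemma Nsm_add: assumes "a \<in> Nsm" "b \<in> Nsm" shows "(\<lambda>e. a e + b e) \<in> Nsm"
proof -
  have B: "\<exists>c>0. \<forall>\<^sub>F e in at_right 0. \<bar>a e + b e\<bar> \<le> c * e ^ m" for m
  proof -
    obtain c1 where c1: "c1 > 0" "\<forall>\<^sub>F e in at_right 0. \<bar>a e\<bar> \<le> c1 * e ^ m"
      using assms(1) unfolding Nsm_iff by blast
    obtain c2 where c2: "c2 > 0" "\<forall>\<^sub>F e in at_right 0. \<bar>b e\<bar> \<le> c2 * e ^ m"
      using assms(2) unfolding Nsm_iff by blast
    have "\<forall>\<^sub>F e in at_right 0. \<bar>a e + b e\<bar> \<le> (c1 + c2) * e ^ m"
      using c1(2) c2(2)
    proof eventually_elim
      case (elim e)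
      have "\<bar>a e + b e\<bar> \<le> \<bar>a e\<bar> + \<bar>b e\<bar>" by (rule abs_triangle_ineq)
      then show ?case using elim by (simp add: distrib_right)
    qed
    then show ?thesis using c1 c2 by (intro exI[of _ "c1 + c2"]) auto
  qed
  have S: "smooth_net (\<lambda>e. a e + b e)"
    using assms by (simp add: Nsm_def smooth_net_add)
  show ?thesis unfolding Nsm_iff by (rule conjI[OF S allI[OF B]])
qed

lemma Nsm_neg: assumes "a \<in> Nsm" shows "(\<lambda>e. - a e) \<in> Nsm"
proof -
  have S: "smooth_net (\<lambda>e. - a e)" using assms by (simp add: Nsm_def smooth_net_neg)
  have B: "\<forall>m::nat. \<exists>c>0. \<forall>\<^sub>F e in at_right 0. \<bar>- a e\<bar> \<le> c * e ^ m"
  proof -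
    have H: "\<forall>m::nat. \<exists>c>0. \<forall>\<^sub>F e in at_right 0. \<bar>a e\<bar> \<le> c * e ^ m"
      using assms unfolding Nsm_iff by blast
    show ?thesis unfolding abs_minus_cancel by (rule H)
  qed
  show ?thesis unfolding Nsm_iff by (rule conjI[OF S B])
qed

lemma Nsm_eqI: "f \<in> Nsm \<Longrightarrow> (\<And>e. f e = g e) \<Longrightarrow> g \<in> Nsm"
proof -
  assume "f \<in> Nsm" "\<And>e. f e = g e"
  then have "f = g" by (intro ext) 
  with \<open>f \<in> Nsm\<close> show "g \<in> Nsm" by (simp only:)
qed

lemma Nsm_diff: assumes "a \<in> Nsm" "b \<in> Nsm" shows "(\<lambda>e. a e - b e) \<in> Nsm"
  by (rule Nsm_eqI[OF Nsm_add[OF assms(1) Nsm_neg[OF assms(2)]]]) simp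

lemma Nsm_zero: "(\<lambda>e. 0) \<in> Nsm"
proof -
  have S: "smooth_net (\<lambda>e. 0)" by (rule smooth_netI[OF SC.const]) simp
  have B: "\<exists>c>0. \<forall>\<^sub>F e in at_right 0. \<bar>(0::real)\<bar> \<le> c * e ^ m" for m :: nat
    by (intro exI[of _ 1] conjI eventually_mono[OF ev01]) auto
  show ?thesis unfolding Nsm_iff by (rule conjI[OF S allI[OF B]])
qed

lemma Nsm_mult: assumes "n \<in> Nsm" "a \<in> Emsm" shows "(\<lambda>e. n e * a e) \<in> Nsm"
proof -
  obtain N c2 where c2: "c2 > 0" "\<forall>\<^sub>F e in at_right 0. \<bar>a e\<bar> \<le> c2 * (1/e) ^ N"
    using assms(2) unfolding Emsm_iff by blast
  have B: "\<exists>c>0. \<forall>\<^sub>F e in at_right 0. \<bar>n e * a e\<bar> \<le> c * e ^ m" for m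
  proof -
    obtain c1 where c1: "c1 > 0" "\<forall>\<^sub>F e in at_right 0. \<bar>n e\<bar> \<le> c1 * e ^ (m + N)"
      using assms(1) unfolding Nsm_iff by blast
    have "\<forall>\<^sub>F e in at_right 0. \<bar>n e * a e\<bar> \<le> (c1 * c2) * e ^ m"
      using c1(2) c2(2) ev01
    proof eventually_elim
      case (elim e)
      have "\<bar>n e * a e\<bar> = \<bar>n e\<bar> * \<bar>a e\<bar>" by (simp add: abs_mult)
      also have "\<dots> \<le> (c1 * e ^ (m + N)) * (c2 * (1/e) ^ N)"
        using elim c1 c2 by (intro mult_mono) auto
      also have "\<dots> = (c1 * c2) * e ^ m"
        using elim by (simp add: power_add power_one_over field_simps)
      finally show ?case .
    qed
    then show ?thesis using c1 c2 by (intro exI[of _ "c1 * c2"]) auto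
  qed
  have S: "smooth_net (\<lambda>e. n e * a e)"
    using assms by (simp add: Nsm_def Emsm_def smooth_net_mult)
  show ?thesis unfolding Nsm_iff by (rule conjI[OF S allI[OF B]])
qed

lemma Em_mono: assumes "\<forall>\<^sub>F e in at_right 0. \<bar>r e\<bar> \<le> c * (1/e) ^ N" "c > 0" "N \<le> M"
  shows "\<forall>\<^sub>F e in at_right 0. \<bar>r e\<bar> \<le> c * (1/(e::real)) ^ M"
  using assms(1) ev01
proof eventually_elim
  case (elim e)
  have "(1/e) ^ N \<le> (1/e) ^ M" using elim assms(3) by (intro power_increasing) auto
  then show ?case using elim assms(2) by (meson mult_left_mono less_imp_le order_trans)
qed

lemma Nsm_Emsm: assumes "a \<in> Nsm" shows "a \<in> Emsm"
proof -
  obtain c where "c > 0" "\<forall>\<^sub>F e in at_right 0. \<bar>a e\<bar> \<le> c * e ^ 0"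
    using assms unfolding Nsm_iff by blast
  moreover have "smooth_net a" using assms by (simp add: Nsm_def)
  ultimately show ?thesis unfolding Emsm_iff by (intro conjI exI[of _ "0::nat"] exI[of _ c]) auto
qed

lemma Emsm_add: assumes "a \<in> Emsm" "b \<in> Emsm" shows "(\<lambda>e. a e + b e) \<in> Emsm"
proof -
  obtain N c1 where c1: "c1 > 0" "\<forall>\<^sub>F e in at_right 0. \<bar>a e\<bar> \<le> c1 * (1/e) ^ N"
    using assms(1) unfolding Emsm_iff by blast
  obtain M c2 where c2: "c2 > 0" "\<forall>\<^sub>F e in at_right 0. \<bar>b e\<bar> \<le> c2 * (1/e) ^ M"
    using assms(2) unfolding Emsm_iff by blast
  have E: "\<forall>\<^sub>F e in at_right 0. \<bar>a e + b e\<bar> \<le> (c1 + c2) * (1/e) ^ (N + M)"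
    using Em_mono[OF c1(2) c1(1) le_add1[of N M]] Em_mono[OF c2(2) c2(1) le_add2[of M N]]
  proof eventually_elim
    case (elim e)
    have "\<bar>a e + b e\<bar> \<le> \<bar>a e\<bar> + \<bar>b e\<bar>" by (rule abs_triangle_ineq)
    then show ?case using elim by (simp add: distrib_right)
  qed
  have S: "smooth_net (\<lambda>e. a e + b e)"
    using assms by (simp add: Emsm_def smooth_net_add)
  show ?thesis unfolding Emsm_iff
    apply (rule conjI[OF S])
    apply (rule exI[of _ "N + M"])
    apply (rule exI[of _ "c1 + c2"])
    using c1 c2 E by simp
qed

lemma Emsm_mult: assumes "a \<in> Emsm" "b \<in> Emsm" shows "(\<lambda>e. a e * b e) \<in> Emsm"
proof -
  obtain N c1 where c1: "c1 > 0" "\<forall>\<^sub>F e in at_right 0. \<bar>a e\<bar> \<le> c1 * (1/e) ^ N"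
    using assms(1) unfolding Emsm_iff by blast
  obtain M c2 where c2: "c2 > 0" "\<forall>\<^sub>F e in at_right 0. \<bar>b e\<bar> \<le> c2 * (1/e) ^ M"
    using assms(2) unfolding Emsm_iff by blast
  have E: "\<forall>\<^sub>F e in at_right 0. \<bar>a e * b e\<bar> \<le> (c1 * c2) * (1/e) ^ (N + M)"
    using c1(2) c2(2) ev01
  proof eventually_elim
    case (elim e)
    have "\<bar>a e * b e\<bar> = \<bar>a e\<bar> * \<bar>b e\<bar>" by (simp add: abs_mult)
    also have "\<dots> \<le> (c1 * (1/e) ^ N) * (c2 * (1/e) ^ M)"
      using elim c1 c2 by (intro mult_mono) auto
    also have "\<dots> = (c1 * c2) * (1/e) ^ (N + M)" by (simp add: power_add)
    finally show ?case .
  qed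
  have S: "smooth_net (\<lambda>e. a e * b e)"
    using assms by (simp add: Emsm_def smooth_net_mult)
  show ?thesis unfolding Emsm_iff
    apply (rule conjI[OF S])
    apply (rule exI[of _ "N + M"])
    apply (rule exI[of _ "c1 * c2"])
    using c1 c2 E by simp
qed

definition ncos :: "(real \<Rightarrow> real) \<Rightarrow> (real \<Rightarrow> real) set" where
  "ncos a = {\<lambda>e. n e + a e | n. n \<in> Nsm}"

lemma carrier_Rtsm: "carrier Rtsm = {ncos a | a. a \<in> Emsm}"
  by (auto simp add: ncos_def Rtsm_def FactRing_def A_RCOSETS_def RCOSETS_def a_r_coset_def r_coset_def Rsm_def)

lemma zero_Rtsm: "\<zero>\<^bsub>Rtsm\<^esub> = Nsm" by (simp add: Rtsm_def FactRing_def)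

lemma mult_Rtsm: "A \<otimes>\<^bsub>Rtsm\<^esub> B = (\<Union>a\<in>A. \<Union>b\<in>B. ncos (\<lambda>e. a e * b e))"
  by (auto simp add: ncos_def Rtsm_def FactRing_def rcoset_mult_def a_r_coset_def r_coset_def Rsm_def)

lemma ncos_mem: "a \<in> ncos a"
  unfolding ncos_def using Nsm_zero by force

lemma ncos_memD: assumes "u \<in> ncos a" shows "(\<lambda>e. u e - a e) \<in> Nsm"
proof -
  obtain n where n: "n \<in> Nsm" "u = (\<lambda>e. n e + a e)" using assms unfolding ncos_def by blast
  show ?thesis by (rule Nsm_eqI[OF n(1)]) (simp add: n(2))
qed

lemma ncos_memI: assumes "(\<lambda>e. u e - a e) \<in> Nsm" shows "u \<in> ncos a"
  unfolding ncos_def mem_Collect_eq by (rule exI[of _ "\<lambda>e. u e - a e"]) (simp add: assms)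

lemma ncos_eq: assumes "(\<lambda>e. b e - a e) \<in> Nsm" shows "ncos b = ncos a"
proof
  show "ncos b \<subseteq> ncos a"
  proof
    fix u assume "u \<in> ncos b"
    have "(\<lambda>e. (u e - b e) + (b e - a e)) \<in> Nsm" by (rule Nsm_add[OF ncos_memD[OF \<open>u \<in> ncos b\<close>] assms])
    then have "(\<lambda>e. u e - a e) \<in> Nsm" by (rule Nsm_eqI) simp
    then show "u \<in> ncos a" by (rule ncos_memI)
  qed
next
  show "ncos a \<subseteq> ncos b"
  proof
    fix u assume "u \<in> ncos a"
    have "(\<lambda>e. (u e - a e) - (b e - a e)) \<in> Nsm" by (rule Nsm_diff[OF ncos_memD[OF \<open>u \<in> ncos a\<close>] assms])
    then have "(\<lambda>e. u e - b e) \<in> Nsm" by (rule Nsm_eqI) simp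
    then show "u \<in> ncos b" by (rule ncos_memI)
  qed
qed

lemma ncos_mem_eq: "u \<in> ncos a \<Longrightarrow> ncos u = ncos a"
  by (rule ncos_eq) (rule ncos_memD)

lemma ncos_Emsm: assumes "a \<in> Emsm" "u \<in> ncos a" shows "u \<in> Emsm"
proof -
  obtain n where n: "n \<in> Nsm" "u = (\<lambda>e. n e + a e)" using assms(2) unfolding ncos_def by blast
  have "(\<lambda>e. n e + a e) \<in> Emsm" by (rule Emsm_add[OF Nsm_Emsm[OF n(1)] assms(1)])
  then show ?thesis using n(2) by simp
qed


lemma aux_bound: "0 \<le> q \<Longrightarrow> q \<le> 1 \<Longrightarrow> 0 < (p::real) \<Longrightarrow> w = p * q \<Longrightarrow> \<bar>w\<bar> \<le> p"
  by (simp add: abs_mult mult_left_le)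

lemma Iset_pos: "e \<in> Iset \<Longrightarrow> 0 < e" by (simp add: Iset_def)
lemma Iset_01: "0 < e \<Longrightarrow> e < 1 \<Longrightarrow> e \<in> Iset" by (simp add: Iset_def)

theorem proposition4p23:
  assumes "ideal J Rtsm"
    and "x \<in> J"
    and "y \<in> carrier Rtsm"
    and "le_Rtsm \<zero>\<^bsub>Rtsm\<^esub> y"
    and "le_Rtsm y x"
  shows "y \<in> J"
proof -
  have Jsub: "J \<subseteq> carrier Rtsm"
    using assms(1) by (simp add: ideal_def additive_subgroup.a_subset)
  obtain ay where ay: "ay \<in> Emsm" "y = ncos ay" using assms(3) carrier_Rtsm by auto
  obtain ax where ax: "ax \<in> Emsm" "x = ncos ax" using assms(2) Jsub carrier_Rtsm by auto
  obtain r s where r: "r \<in> Nsm" "s \<in> y" "\<forall>e\<in>Iset. r e \<le> s e"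
    using assms(4) unfolding zero_Rtsm le_Rtsm_def by blast
  obtain s' t where s't: "s' \<in> y" "t \<in> x" "\<forall>e\<in>Iset. s' e \<le> t e"
    using assms(5) unfolding le_Rtsm_def by blast
  define Y where "Y = (\<lambda>e. s e - r e)"
  have sY: "(\<lambda>e. s e - ay e) \<in> Nsm" using ncos_memD r ay by auto
  have Ycos: "(\<lambda>e. Y e - ay e) \<in> Nsm"
    by (rule Nsm_eqI[OF Nsm_diff[OF sY r(1)]]) (simp add: Y_def)
  have yY: "y = ncos Y" using ncos_eq[OF Ycos] ay by simp
  have YE: "Y \<in> Emsm" using ncos_Emsm[OF ay(1) ncos_memI[OF Ycos]] .
  have s'n: "(\<lambda>e. s' e - ay e) \<in> Nsm" using ncos_memD s't ay by auto
  define mm where "mm = (\<lambda>e. Y e - s' e)"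
  have mmN: "mm \<in> Nsm"
    by (rule Nsm_eqI[OF Nsm_diff[OF Ycos s'n]]) (simp add: mm_def)
  define X where "X = (\<lambda>e. t e + mm e)"
  have tn: "(\<lambda>e. t e - ax e) \<in> Nsm" using ncos_memD s't ax by auto
  have Xcos: "(\<lambda>e. X e - ax e) \<in> Nsm"
    by (rule Nsm_eqI[OF Nsm_add[OF tn mmN]]) (simp add: X_def)
  have xX: "x = ncos X" using ncos_eq[OF Xcos] ax by simp
  have XE: "X \<in> Emsm" using ncos_Emsm[OF ax(1) ncos_memI[OF Xcos]] .
  have Ysm: "smooth_net Y" and Xsm: "smooth_net X" using YE XE by (simp_all add: Emsm_def)
  have Y0: "0 \<le> Y e" if "e \<in> Iset" for e using r(3) that by (simp add: Y_def)
  have YX: "Y e \<le> X e" if "e \<in> Iset" for e using s't(3) that by (simp add: X_def mm_def)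
  have den: "0 < X e + exp (-1/e)" if "e \<in> Iset" for e
    using Y0[OF that] YX[OF that] by (simp add: add_nonneg_pos)
  define z where "z = (\<lambda>e. if e \<in> Iset then Y e / (X e + exp (-1/e)) else 0)"
  have z01: "0 \<le> z e \<and> z e \<le> 1" if "e \<in> Iset" for e
  proof -
    have d: "0 < X e + exp (-1/e)" by (rule den[OF that])
    have le: "Y e \<le> X e + exp (-1/e)" using YX[OF that] exp_gt_zero[of "-1/e"] by linarith
    have "0 \<le> Y e / (X e + exp (-1/e))" using Y0[OF that] d by simp
    moreover have "Y e / (X e + exp (-1/e)) \<le> 1" using le d by (simp add: pos_divide_le_eq)
    ultimately show ?thesis using that by (simp add: z_def)
  qed
  have "(\<lambda>e. -1 * inverse e) \<in> SC Iset"
    by (rule SC.mult[OF SC.const SC.inv[OF SC.ident]]) (auto simp: Iset_def)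
  then have "(\<lambda>e. exp (-1 * inverse e)) \<in> SC Iset" by (rule SC.expo)
  then have "(\<lambda>e. X e + exp (-1 * inverse e)) \<in> SC Iset" by (rule SC.add[OF smooth_net_SC[OF Xsm]])
  then have "(\<lambda>e. inverse (X e + exp (-1 * inverse e))) \<in> SC Iset"
  proof (rule SC.inv)
    show "\<forall>x\<in>Iset. X x + exp (-1 * inverse x) \<noteq> 0"
    proof
      fix e assume "e \<in> Iset"
      have "-1 * inverse e = -1/e" by (simp add: divide_inverse)
      then show "X e + exp (-1 * inverse e) \<noteq> 0" using den[OF \<open>e \<in> Iset\<close>] by simp
    qed
  qed
  then have "(\<lambda>e. Y e * inverse (X e + exp (-1 * inverse e))) \<in> SC Iset"
    by (rule SC.mult[OF smooth_net_SC[OF Ysm]])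
  then have zSC: "z \<in> SC Iset"
    by (rule SC.cong) (auto simp: z_def divide_inverse)
  have zsm: "smooth_net z" by (rule smooth_netI[OF zSC]) (simp add: z_def)
  have zE: "z \<in> Emsm"
  proof -
    have E: "\<forall>\<^sub>F e in at_right 0. \<bar>z e\<bar> \<le> 1 * (1/e) ^ 0"
      using ev01 by eventually_elim (use z01 Iset_01 in auto)
    show ?thesis unfolding Emsm_iff
      apply (rule conjI[OF zsm])
      apply (rule exI[of _ 0])
      apply (rule exI[of _ 1])
      using E by simp
  qed
  define w where "w = (\<lambda>e. Y e - z e * X e)"
  have wN: "w \<in> Nsm"
  proof -
    have "smooth_net (\<lambda>e. Y e + - (z e * X e))"
      by (rule smooth_net_add[OF Ysm smooth_net_neg[OF smooth_net_mult[OF zsm Xsm]]])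
    moreover have "(\<lambda>e. Y e + - (z e * X e)) = w" by (simp add: w_def)
    ultimately have S: "smooth_net w" by simp
    have wb: "\<bar>w e\<bar> \<le> exp (-1/e)" if "e \<in> Iset" for e
    proof -
      have d: "0 < X e + exp (-1/e)" by (rule den[OF that])
      have "w e = exp (-1/e) * (Y e / (X e + exp (-1/e)))"
        using d that by (simp add: w_def z_def field_simps)
      moreover have "0 \<le> Y e / (X e + exp (-1/e))" "Y e / (X e + exp (-1/e)) \<le> 1"
        using z01[OF that] that by (simp_all add: z_def)
      ultimately show ?thesis
        by (intro aux_bound) auto
    qed
    have B: "\<exists>c>0. \<forall>\<^sub>F e in at_right 0. \<bar>w e\<bar> \<le> c * e ^ m" for m :: nat
    proof -
      obtain c where c: "c > 0" "\<forall>\<^sub>F e in at_right (0::real). \<bar>exp (- 1 / e)\<bar> \<le> c * e ^ m"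
        using exp_neg_small by blast
      have "\<forall>\<^sub>F e in at_right 0. \<bar>w e\<bar> \<le> c * e ^ m"
        using c(2) ev01
      proof eventually_elim
        case (elim e)
        then have "\<bar>w e\<bar> \<le> exp (-1/e)" using wb Iset_01 by auto
        then show ?case using elim by simp
      qed
      then show ?thesis using c(1) by blast
    qed
    show ?thesis unfolding Nsm_iff by (rule conjI[OF S allI[OF B]])
  qed
  define Z where "Z = ncos z"
  have Zc: "Z \<in> carrier Rtsm" unfolding carrier_Rtsm Z_def using zE by blast
  have key: "ncos (\<lambda>e. a e * b e) = ncos Y" if a: "a \<in> ncos z" and b: "b \<in> ncos X" for a b
  proof (rule ncos_eq)
    have n1: "(\<lambda>e. a e - z e) \<in> Nsm" using ncos_memD[OF a] .
    have n2: "(\<lambda>e. b e - X e) \<in> Nsm" using ncos_memD[OF b] .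
    have bE: "b \<in> Emsm" using ncos_Emsm[OF XE b] .
    have "(\<lambda>e. ((a e - z e) * b e + (b e - X e) * z e) - w e) \<in> Nsm"
      by (rule Nsm_diff[OF Nsm_add[OF Nsm_mult[OF n1 bE] Nsm_mult[OF n2 zE]] wN])
    then show "(\<lambda>e. a e * b e - Y e) \<in> Nsm"
      by (rule Nsm_eqI) (simp add: w_def algebra_simps)
  qed
  have "Z \<otimes>\<^bsub>Rtsm\<^esub> x = y"
  proof -
    have "Z \<otimes>\<^bsub>Rtsm\<^esub> x = (\<Union>a\<in>ncos z. \<Union>b\<in>ncos X. ncos (\<lambda>e. a e * b e))"
      unfolding mult_Rtsm Z_def xX ..
    also have "\<dots> = ncos Y"
      using key ncos_mem[of z] ncos_mem[of X] by blast
    finally show ?thesis using yY by simp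
  qed
  moreover have "Z \<otimes>\<^bsub>Rtsm\<^esub> x \<in> J"
    by (rule ideal.I_l_closed[OF assms(1) assms(2) Zc])
  ultimately show ?thesis by simp
qed

end
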